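(* Let $R$ be an associative ring with identity and $a,b,c,d\in R$ such that $a$ has a $(b,c)$-inverse $a^{\|(b,c)}$. Let $c^{-}$ be any (fixed) inner inverse of $c$ and put $f=c^{-}c$. Then the following are equivalent: (i) $d$ has a $(b,c)$-inverse; (ii) $f\in fda^{\|(b,c)}fR\cap Rfda^{\|(b,c)}f$; (iii) $fda^{\|(b,c)}+1-f$ is invertible in $R$. In this case $d^{\|(b,c)}=a^{\|(b,c)}(fda^{\|(b,c)}+1-f)^{-1}$.
   Context: For $a,b,c\in R$, $a$ is $(b,c)$-invertible if there exists $y\in R$ with $y\in (bRy)\cap(yRc)$, $yab=b$ and $cay=c$; such $y$ is unique and denoted $a^{\|(b,c)}$. An inner inverse of $c$ is an element $c^{-}$ with $cc^{-}c=c$ (it exists here since $c$ is regular whenever a $(b,c)$-inverse exists). *)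

theory Defs
  imports Main
begin

definition is_bc_inverse :: "'a::ring_1 \<Rightarrow> 'a \<Rightarrow> 'a \<Rightarrow> 'a \<Rightarrow> bool" where
  "is_bc_inverse a b c y \<longleftrightarrow>
     (\<exists>x. y = b * x * y) \<and> (\<exists>x. y = y * x * c) \<and> y * a * b = b \<and> c * a * y = c"

definition bc_invertible :: "'a::ring_1 \<Rightarrow> 'a \<Rightarrow> 'a \<Rightarrow> bool" where
  "bc_invertible a b c \<longleftrightarrow> (\<exists>y. is_bc_inverse a b c y)"

definition bc_inv :: "'a::ring_1 \<Rightarrow> 'a \<Rightarrow> 'a \<Rightarrow> 'a" where
  "bc_inv a b c = (THE y. is_bc_inverse a b c y)"

definition ring_invertible :: "'a::ring_1 \<Rightarrow> bool" where
  "ring_invertible u \<longleftrightarrow> (\<exists>v. u * v = 1 \<and> v * u = 1)"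

definition ring_inv :: "'a::ring_1 \<Rightarrow> 'a" where
  "ring_inv u = (THE v. u * v = 1 \<and> v * u = 1)"

end

theory Submission
  imports Defs
begin

lemma bc_unique:
  fixes a b c y1 y2 :: "'a::ring_1"
  assumes "is_bc_inverse a b c y1" "is_bc_inverse a b c y2"
  shows "y1 = y2"
proof -
  obtain s where s: "y1 = y1 * s * c" using assms(1) unfolding is_bc_inverse_def by blast
  obtain p where p: "y2 = b * p * y2" using assms(2) unfolding is_bc_inverse_def by blast
  have e1: "y1 * a * b = b" "c * a * y2 = c" using assms unfolding is_bc_inverse_def by auto
  have p': "b * (p * y2) = y2" using p[symmetric] by (simp add: mult.assoc)
  have s': "y1 * (s * c) = y1" using s[symmetric] by (simp add: mult.assoc)
  have yabX: "y1 * (a * (b * X)) = b * X" for X using e1(1) by (simp add: mult.assoc[symmetric])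
  have cayX: "c * (a * y2) = c" using e1(2) by (simp add: mult.assoc)
  have "y1 * a * y2 = y1 * (a * (b * (p * y2)))" by (simp add: mult.assoc p')
  also have "\<dots> = b * (p * y2)" by (simp add: yabX)
  also have "\<dots> = y2" by (rule p')
  finally have A: "y1 * a * y2 = y2" .
  have "y1 * a * y2 = y1 * (s * c) * a * y2" by (simp add: s')
  also have "\<dots> = y1 * (s * (c * (a * y2)))" by (simp add: mult.assoc)
  also have "\<dots> = y1" by (simp add: cayX s')
  finally show ?thesis using A by simp
qed

lemma bc_inv_eq:
  fixes a b c y :: "'a::ring_1"
  assumes "is_bc_inverse a b c y"
  shows "bc_inv a b c = y"
  unfolding bc_inv_def using assms bc_unique by blast

lemma ring_inv_eq:
  fixes u v :: "'a::ring_1"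
  assumes "u * v = 1" "v * u = 1"
  shows "ring_inv u = v"
  unfolding ring_inv_def
proof (rule the_equality)
  show "u * v = 1 \<and> v * u = 1" using assms by simp
  fix w assume h: "u * w = 1 \<and> w * u = 1"
  have "w = w * (u * v)" using assms by simp
  also have "\<dots> = (w * u) * v" by (simp add: mult.assoc)
  also have "\<dots> = v" using h by simp
  finally show "w = v" .
qed

theorem theorem3p14:
  fixes a b c d cm f :: "'a::ring_1"
  assumes ha: "bc_invertible a b c"
    and hcm: "c * cm * c = c"
    and hf: "f = cm * c"
  shows "(bc_invertible d b c \<longleftrightarrow>
            f \<in> {f * d * bc_inv a b c * f * r | r. True} \<inter> {r * f * d * bc_inv a b c * f | r. True})
       \<and> (f \<in> {f * d * bc_inv a b c * f * r | r. True} \<inter> {r * f * d * bc_inv a b c * f | r. True}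
            \<longleftrightarrow> ring_invertible (f * d * bc_inv a b c + 1 - f))
       \<and> (bc_invertible d b c \<longrightarrow>
            bc_inv d b c = bc_inv a b c * ring_inv (f * d * bc_inv a b c + 1 - f))"
proof -
  define y where "y = bc_inv a b c"
  obtain y0 where y0: "is_bc_inverse a b c y0" using ha unfolding bc_invertible_def by blast
  have Y: "is_bc_inverse a b c y" using bc_inv_eq[OF y0] y0 y_def by simp
  obtain x1 where x1: "y = b * x1 * y" using Y unfolding is_bc_inverse_def by blast
  obtain x2 where x2: "y = y * x2 * c" using Y unfolding is_bc_inverse_def by blast
  have yab: "y * a * b = b" and cay: "c * a * y = c" using Y unfolding is_bc_inverse_def by auto
  have x1': "b * (x1 * y) = y" using x1[symmetric] by (simp add: mult.assoc)
  have x2': "y * (x2 * c) = y" using x2[symmetric] by (simp add: mult.assoc)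
  have yabX: "y * (a * (b * X)) = b * X" for X using yab by (simp add: mult.assoc[symmetric])
  have yab': "y * (a * b) = b" using yab by (simp add: mult.assoc)
  have cf: "c * f = c" unfolding hf using hcm by (simp add: mult.assoc[symmetric])
  have cfX: "c * (f * X) = c * X" for X using cf by (simp add: mult.assoc[symmetric])
  have ff: "f * f = f" unfolding hf using hcm by (simp add: mult.assoc)
  have ffX: "f * (f * X) = f * X" for X using ff by (simp add: mult.assoc[symmetric])
  have yf: "y * f = y"
  proof -
    have "y * f = y * (x2 * c) * f" by (simp add: x2')
    also have "\<dots> = y * (x2 * (c * f))" by (simp add: mult.assoc)
    also have "\<dots> = y" by (simp add: cf x2')
    finally show ?thesis .
  qed
  have yfX: "y * (f * X) = y * X" for X using yf by (simp add: mult.assoc[symmetric])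
  have fy': "cm * (c * (a * y)) = f" unfolding hf using cay by (simp add: mult.assoc)
  define u where "u = f * d * y + 1 - f"
  have w: "f * (d * (y * f)) = f * (d * y)" by (simp add: yf)
  have uf: "u * f = f * (d * y)" unfolding u_def by (simp add: algebra_simps w ff)
  have fu: "f * u = f * (d * y)" unfolding u_def by (simp add: algebra_simps ffX ff)
  define S where "S = {f * d * bc_inv a b c * f * r | r. True} \<inter> {r * f * d * bc_inv a b c * f | r. True}"
  have Sdef: "f \<in> S \<longleftrightarrow> (\<exists>t. f = f * (d * (y * t))) \<and> (\<exists>s. f = s * (f * (d * y)))"
    unfolding S_def y_def[symmetric] by (simp add: mult.assoc yf yfX)
  have i_ii: "f \<in> S" if hd: "bc_invertible d b c"
  proof -
    obtain z where Z: "is_bc_inverse d b c z" using hd unfolding bc_invertible_def by blast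
    obtain p where p: "z = b * p * z" using Z unfolding is_bc_inverse_def by blast
    obtain q where q: "z = z * q * c" using Z unfolding is_bc_inverse_def by blast
    have zdb: "z * d * b = b" and cdz: "c * d * z = c" using Z unfolding is_bc_inverse_def by auto
    have p': "b * (p * z) = z" using p[symmetric] by (simp add: mult.assoc)
    have q': "z * (q * c) = z" using q[symmetric] by (simp add: mult.assoc)
    have zdbX: "z * (d * (b * X)) = b * X" for X using zdb by (simp add: mult.assoc[symmetric])
    have cdz': "c * (d * z) = c" using cdz by (simp add: mult.assoc)
    have yaz: "y * (a * z) = z"
    proof -
      have "y * (a * z) = y * (a * (b * (p * z)))" by (simp add: p')
      also have "\<dots> = b * (p * z)" by (rule yabX)
      also have "\<dots> = z" by (rule p')
      finally show ?thesis .
    qed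
    have "f * (d * (y * (a * z))) = f"
      by (simp add: yaz hf mult.assoc cdz')
    then have A: "\<exists>t. f = f * (d * (y * t))" by metis
    have zf: "z * f = z"
    proof -
      have "z * f = z * (q * c) * f" by (simp add: q')
      also have "\<dots> = z * (q * (c * f))" by (simp add: mult.assoc)
      also have "\<dots> = z" by (simp add: cf q')
      finally show ?thesis .
    qed
    have zfX: "z * (f * X) = z * X" for X using zf by (simp add: mult.assoc[symmetric])
    have yz: "z * (d * y) = y"
    proof -
      have "z * (d * y) = z * (d * (b * (x1 * y)))" by (simp add: x1')
      also have "\<dots> = b * (x1 * y)" by (simp add: zdbX)
      also have "\<dots> = y" by (rule x1')
      finally show ?thesis .
    qed
    have "cm * (c * (a * z)) * (f * (d * y)) = f" by (simp add: mult.assoc zfX yz fy')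
    then have B: "\<exists>s. f = s * (f * (d * y))" by metis
    show ?thesis using A B Sdef by blast
  qed
  have ii_iii: "ring_invertible u" if hS: "f \<in> S"
  proof -
    obtain t s where t: "f = f * (d * (y * t))" and s: "f = s * (f * (d * y))" using hS Sdef by blast
    have tX: "f * (d * (y * (t * X))) = f * X" for X using t[symmetric] by (simp add: mult.assoc[symmetric])
    have sX: "s * (f * (d * (y * X))) = f * X" for X using s[symmetric] by (simp add: mult.assoc[symmetric])
    have s': "s * (f * (d * y)) = f" using s[symmetric] .
    define v where "v = f * (t * f) + 1 - f"
    define v' where "v' = f * (s * f) + 1 - f"
    have uv: "u * v = 1"
      unfolding u_def v_def by (simp add: algebra_simps w ff ffX yfX tX)
    have vu: "v' * u = 1"
      unfolding u_def v'_def by (simp add: algebra_simps w ff ffX yfX s')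
    have "v' = v' * (u * v)" using uv by simp
    also have "\<dots> = (v' * u) * v" by (simp add: mult.assoc)
    also have "\<dots> = v" using vu by simp
    finally have "v' = v" .
    then show ?thesis unfolding ring_invertible_def using uv vu by blast
  qed
  have iii_ii: "f \<in> S" if hu: "ring_invertible u"
  proof -
    obtain v where uv: "u * v = 1" and vu: "v * u = 1" using hu unfolding ring_invertible_def by blast
    have "f = f * (u * v)" using uv by simp
    also have "\<dots> = (f * u) * v" by (simp add: mult.assoc)
    also have "\<dots> = f * (d * (y * v))" by (simp add: fu mult.assoc)
    finally have A: "f = f * (d * (y * v))" .
    have "f = (v * u) * f" using vu by simp
    also have "\<dots> = v * (u * f)" by (simp add: mult.assoc)
    also have "\<dots> = v * (f * (d * y))" by (simp add: uf)
    finally have B: "f = v * (f * (d * y))" .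
    show ?thesis using A B Sdef by blast
  qed
  have iii_i: "is_bc_inverse d b c (y * ring_inv u)" if hu: "ring_invertible u"
  proof -
    obtain v where uv: "u * v = 1" and vu: "v * u = 1" using hu unfolding ring_invertible_def by blast
    have rv: "ring_inv u = v" using ring_inv_eq uv vu by blast
    have u1f: "u * (1 - f) = 1 - f" unfolding u_def by (simp add: algebra_simps w ff ffX)
    have v1f: "v * (1 - f) = 1 - f"
    proof -
      have "v * (1 - f) = v * (u * (1 - f))" by (simp add: u1f)
      also have "\<dots> = (v * u) * (1 - f)" by (simp add: mult.assoc)
      finally show ?thesis using vu by simp
    qed
    have yv: "y * (v * f) = y * v"
    proof -
      have "y * (v * (1 - f)) = y * (1 - f)" by (simp add: v1f)
      then have "y * v - y * (v * f) = y - y * f" by (simp add: right_diff_distrib)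
      then show ?thesis by (simp add: yf)
    qed
    have vfdy: "v * (f * (d * y)) = f"
    proof -
      have "v * (f * (d * y)) = v * (u * f)" by (simp add: uf)
      also have "\<dots> = (v * u) * f" by (simp add: mult.assoc)
      finally show ?thesis using vu by simp
    qed
    have e1: "y * v = b * x1 * (y * v)"
    proof -
      have "b * x1 * (y * v) = (b * (x1 * y)) * v" by (simp add: mult.assoc)
      then show ?thesis by (simp add: x1')
    qed
    have e2: "y * v = y * v * cm * c"
    proof -
      have "y * v * cm * c = y * (v * f)" by (simp add: hf mult.assoc)
      then show ?thesis by (simp add: yv)
    qed
    have fdyv: "f * (d * (y * v)) = f"
    proof -
      have "f * (d * (y * v)) = (f * u) * v" by (simp add: fu mult.assoc)
      also have "\<dots> = f * (u * v)" by (simp add: mult.assoc)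
      finally show ?thesis using uv by simp
    qed
    have e3: "c * d * (y * v) = c"
    proof -
      have "c * d * (y * v) = c * (f * (d * (y * v)))" by (simp add: cfX mult.assoc)
      then show ?thesis by (simp add: fdyv cf)
    qed
    have e4: "y * v * d * b = b"
    proof -
      have "y * v * d * b = y * (v * (d * (y * (a * b))))" by (simp add: mult.assoc yab')
      also have "\<dots> = (y * (v * f)) * (d * (y * (a * b)))" by (simp add: yv mult.assoc)
      also have "\<dots> = y * ((v * (f * (d * y))) * (a * b))" by (simp add: mult.assoc)
      also have "\<dots> = y * (f * (a * b))" by (simp add: vfdy)
      also have "\<dots> = b" by (simp add: yfX yab')
      finally show ?thesis .
    qed
    show ?thesis unfolding rv is_bc_inverse_def
      apply (intro conjI)
         apply (rule exI[of _ x1], rule e1)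
        apply (rule exI[of _ cm], rule e2)
       apply (rule e4)
      apply (rule e3)
      done
  qed
  have main: "(bc_invertible d b c \<longleftrightarrow> f \<in> S) \<and> (f \<in> S \<longleftrightarrow> ring_invertible u)
     \<and> (bc_invertible d b c \<longrightarrow> bc_inv d b c = y * ring_inv u)"
  proof -
    have "ring_invertible u \<Longrightarrow> bc_invertible d b c" using iii_i unfolding bc_invertible_def by blast
    moreover have "bc_invertible d b c \<Longrightarrow> bc_inv d b c = y * ring_inv u"
      using i_ii ii_iii iii_i bc_inv_eq by blast
    ultimately show ?thesis using i_ii ii_iii iii_ii by blast
  qed
  from main show ?thesis unfolding S_def u_def y_def .
qed

end
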